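(* Let $G$ be a BDH graph with color classes $X,Y$, with at least three vertices and no universal vertex. Then $x\in X$ is a cut-vertex of $G$ if and only if $(\{x\},N(x))\in\mathcal{B}(G)$. Analogously, $y\in Y$ is a cut-vertex of $G$ if and only if $(N(y),\{y\})\in\mathcal{B}(G)$.
   Context: A biclique of a bipartite graph is written as the pair $(U,W)$ of its shores, $U\subseteq X$, $W\subseteq Y$, with every vertex of $U$ adjacent to every vertex of $W$; $\mathcal{B}(G)$ is the set of inclusion-wise maximal bicliques. A graph is distance hereditary if distances in every connected induced subgraph equal distances in the graph; BDH means bipartite distance hereditary (equivalently: bipartite, no induced chordless cycle of length $\ge 6$, no induced domino, where a domino is $C_6$ plus a chord between antipodal vertices). A universal vertex is adjacent to all vertices of the opposite color class. *)

theory Defs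
  imports Main
begin

definition graph :: "'a set \<Rightarrow> ('a \<Rightarrow> 'a \<Rightarrow> bool) \<Rightarrow> bool" where
  "graph V E \<longleftrightarrow> finite V \<and> (\<forall>u v. E u v \<longrightarrow> u \<in> V \<and> v \<in> V \<and> E v u \<and> u \<noteq> v)"

definition bipartite :: "'a set \<Rightarrow> ('a \<Rightarrow> 'a \<Rightarrow> bool) \<Rightarrow> 'a set \<Rightarrow> 'a set \<Rightarrow> bool" where
  "bipartite V E X Y \<longleftrightarrow> graph V E \<and> X \<inter> Y = {} \<and> X \<union> Y = V \<and>
     (\<forall>u v. E u v \<longrightarrow> (u \<in> X \<and> v \<in> Y) \<or> (u \<in> Y \<and> v \<in> X))"

text \<open>Walks inside a vertex subset S (walks of the induced subgraph G[S]).\<close>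
definition walk_in :: "'a set \<Rightarrow> ('a \<Rightarrow> 'a \<Rightarrow> bool) \<Rightarrow> 'a list \<Rightarrow> bool" where
  "walk_in S E xs \<longleftrightarrow> xs \<noteq> [] \<and> set xs \<subseteq> S \<and> (\<forall>i. Suc i < length xs \<longrightarrow> E (xs ! i) (xs ! Suc i))"

definition reach :: "'a set \<Rightarrow> ('a \<Rightarrow> 'a \<Rightarrow> bool) \<Rightarrow> 'a \<Rightarrow> 'a \<Rightarrow> bool" where
  "reach S E u v \<longleftrightarrow> (\<exists>xs. walk_in S E xs \<and> hd xs = u \<and> last xs = v)"

definition connected_in :: "'a set \<Rightarrow> ('a \<Rightarrow> 'a \<Rightarrow> bool) \<Rightarrow> bool" where
  "connected_in S E \<longleftrightarrow> S \<noteq> {} \<and> (\<forall>u\<in>S. \<forall>v\<in>S. reach S E u v)"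

text \<open>Distance in the induced subgraph G[S] (number of edges of a shortest walk);
  only meaningful when u and v are connected in G[S].\<close>
definition dist_in :: "'a set \<Rightarrow> ('a \<Rightarrow> 'a \<Rightarrow> bool) \<Rightarrow> 'a \<Rightarrow> 'a \<Rightarrow> nat" where
  "dist_in S E u v = (LEAST n. \<exists>xs. walk_in S E xs \<and> hd xs = u \<and> last xs = v \<and> length xs = Suc n)"

definition distance_hereditary :: "'a set \<Rightarrow> ('a \<Rightarrow> 'a \<Rightarrow> bool) \<Rightarrow> bool" where
  "distance_hereditary V E \<longleftrightarrow>
     (\<forall>S. S \<subseteq> V \<longrightarrow> connected_in S E \<longrightarrow> (\<forall>u\<in>S. \<forall>v\<in>S. dist_in S E u v = dist_in V E u v))"

definition BDH :: "'a set \<Rightarrow> ('a \<Rightarrow> 'a \<Rightarrow> bool) \<Rightarrow> 'a set \<Rightarrow> 'a set \<Rightarrow> bool" where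
  "BDH V E X Y \<longleftrightarrow> bipartite V E X Y \<and> distance_hereditary V E"

definition components :: "'a set \<Rightarrow> ('a \<Rightarrow> 'a \<Rightarrow> bool) \<Rightarrow> 'a set set" where
  "components S E = (\<lambda>u. {v \<in> S. reach S E u v}) ` S"

definition cut_vertex :: "'a set \<Rightarrow> ('a \<Rightarrow> 'a \<Rightarrow> bool) \<Rightarrow> 'a \<Rightarrow> bool" where
  "cut_vertex V E v \<longleftrightarrow> v \<in> V \<and> card (components (V - {v}) E) > card (components V E)"

definition nbhd :: "'a set \<Rightarrow> ('a \<Rightarrow> 'a \<Rightarrow> bool) \<Rightarrow> 'a \<Rightarrow> 'a set" where
  "nbhd V E x = {y \<in> V. E x y}"

definition universal_vertex :: "'a set \<Rightarrow> ('a \<Rightarrow> 'a \<Rightarrow> bool) \<Rightarrow> 'a set \<Rightarrow> 'a set \<Rightarrow> 'a \<Rightarrow> bool" where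
  "universal_vertex V E X Y v \<longleftrightarrow>
     (v \<in> X \<and> (\<forall>y\<in>Y. E v y)) \<or> (v \<in> Y \<and> (\<forall>x\<in>X. E x v))"

definition biclique :: "('a \<Rightarrow> 'a \<Rightarrow> bool) \<Rightarrow> 'a set \<Rightarrow> 'a set \<Rightarrow> 'a set \<times> 'a set \<Rightarrow> bool" where
  "biclique E X Y B \<longleftrightarrow> fst B \<subseteq> X \<and> snd B \<subseteq> Y \<and> (\<forall>u\<in>fst B. \<forall>w\<in>snd B. E u w)"

definition max_bicliques :: "('a \<Rightarrow> 'a \<Rightarrow> bool) \<Rightarrow> 'a set \<Rightarrow> 'a set \<Rightarrow> ('a set \<times> 'a set) set" where
  "max_bicliques E X Y = {B. biclique E X Y B \<and>
     (\<forall>B'. biclique E X Y B' \<and> fst B \<subseteq> fst B' \<and> snd B \<subseteq> snd B' \<longrightarrow> B' = B)}"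

end

theory Submission imports Defs begin

lemma walk_single[simp]: "walk_in S E [a] \<longleftrightarrow> a \<in> S"
  unfolding walk_in_def by auto

lemma walk_Cons2[simp]: "walk_in S E (a # b # xs) \<longleftrightarrow> a \<in> S \<and> E a b \<and> walk_in S E (b # xs)"
proof -
  have "(\<forall>i. Suc i < length (a#b#xs) \<longrightarrow> E ((a#b#xs) ! i) ((a#b#xs) ! Suc i)) \<longleftrightarrow>
        E a b \<and> (\<forall>i. Suc i < length (b#xs) \<longrightarrow> E ((b#xs) ! i) ((b#xs) ! Suc i))"
    (is "?L \<longleftrightarrow> ?R")
  proof
    assume L: ?L
    show ?R
    proof
      show "E a b" using L[rule_format, of 0] by simp
      show "\<forall>i. Suc i < length (b#xs) \<longrightarrow> E ((b#xs) ! i) ((b#xs) ! Suc i)"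
        using L by (metis Suc_less_eq length_Cons nth_Cons_Suc)
    qed
  next
    assume R: ?R
    show ?L
    proof (intro allI impI)
      fix i assume "Suc i < length (a#b#xs)"
      then show "E ((a#b#xs) ! i) ((a#b#xs) ! Suc i)"
        using R by (cases i) auto
    qed
  qed
  then show ?thesis unfolding walk_in_def by auto
qed

lemma walk_set: "walk_in S E xs \<Longrightarrow> set xs \<subseteq> S" unfolding walk_in_def by auto

lemma walk_nonempty: "walk_in S E xs \<Longrightarrow> xs \<noteq> []" unfolding walk_in_def by auto

lemma walk_append:
  "walk_in S E xs \<Longrightarrow> walk_in S E ys \<Longrightarrow> last xs = hd ys \<Longrightarrow> walk_in S E (xs @ tl ys)"
proof (induction xs rule: induct_list012)
  case 1 then show ?case by (simp add: walk_in_def)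
next
  case (2 x) then show ?case by (cases ys) auto
next
  case (3 x y zs) then show ?case by auto
qed

lemma reach_refl: "u \<in> S \<Longrightarrow> reach S E u u"
  unfolding reach_def by (rule exI[of _ "[u]"]) simp

lemma reach_trans: "reach S E u v \<Longrightarrow> reach S E v w \<Longrightarrow> reach S E u w"
proof -
  assume "reach S E u v" "reach S E v w"
  then obtain xs ys where "walk_in S E xs" "hd xs = u" "last xs = v"
    "walk_in S E ys" "hd ys = v" "last ys = w" unfolding reach_def by blast
  moreover have "hd (xs @ tl ys) = u" using calculation walk_nonempty by (cases xs) auto
  moreover have "last (xs @ tl ys) = w"
  proof (cases "tl ys = []")
    case True
    then have "ys = [hd ys]" using walk_nonempty[OF \<open>walk_in S E ys\<close>]
      by (cases ys) auto
    then show ?thesis using True calculation by (metis append.right_neutral last.simps)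
  next
    case False
    then show ?thesis using calculation walk_nonempty
      by (metis last_appendR last_tl)
  qed
  ultimately show ?thesis unfolding reach_def using walk_append by metis
qed

lemma reach_edge: "u \<in> S \<Longrightarrow> v \<in> S \<Longrightarrow> E u v \<Longrightarrow> reach S E u v"
  unfolding reach_def by (rule exI[of _ "[u,v]"]) simp

lemma walk_rev: assumes sym: "\<And>a b. E a b \<Longrightarrow> E b a"
  shows "walk_in S E xs \<Longrightarrow> walk_in S E (rev xs)"
proof (induction xs rule: induct_list012)
  case 1 then show ?case by (simp add: walk_in_def)
next
  case (2 x) then show ?case by auto
next
  case (3 x y zs)
  have "walk_in S E (rev (y # zs))" using 3 by auto
  moreover have "walk_in S E [y, x]" using "3.prems" sym walk_set[OF "3.prems"] by simp
  moreover have "last (rev (y#zs)) = hd [y,x]" by simp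
  ultimately have "walk_in S E (rev (y#zs) @ tl [y,x])" by (rule walk_append)
  then show ?case by simp
qed

lemma reach_sym: assumes sym: "\<And>a b. E a b \<Longrightarrow> E b a"
  shows "reach S E u v \<Longrightarrow> reach S E v u"
proof -
  assume "reach S E u v"
  then obtain xs where xs: "walk_in S E xs" "hd xs = u" "last xs = v" unfolding reach_def by blast
  have "xs \<noteq> []" using walk_nonempty[OF xs(1)] .
  then have "walk_in S E (rev xs) \<and> hd (rev xs) = v \<and> last (rev xs) = u"
    using walk_rev[OF sym xs(1)] xs by (simp add: hd_rev last_rev)
  then show ?thesis unfolding reach_def by blast
qed

lemma reach_neighbor: "reach S E u v \<Longrightarrow> u \<noteq> v \<Longrightarrow> \<exists>w\<in>S. E u w"
proof -
  assume "reach S E u v" "u \<noteq> v"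
  then obtain xs where xs: "walk_in S E xs" "hd xs = u" "last xs = v" unfolding reach_def by blast
  show ?thesis
  proof (cases xs)
    case Nil then show ?thesis using xs walk_nonempty by blast
  next
    case (Cons a r)
    show ?thesis
    proof (cases r)
      case Nil then show ?thesis using xs Cons \<open>u \<noteq> v\<close> by simp
    next
      case (Cons b r') then show ?thesis using xs \<open>xs = a # r\<close> walk_set[OF xs(1)] by auto
    qed
  qed
qed

lemma short_walk: "walk_in S E xs \<Longrightarrow> length xs \<le> 3 \<Longrightarrow>
   hd xs = last xs \<or> E (hd xs) (last xs) \<or> (\<exists>m\<in>S. E (hd xs) m \<and> E m (last xs))"
proof -
  assume w: "walk_in S E xs" and l: "length xs \<le> 3"
  show ?thesis
  proof (cases xs)
    case Nil then show ?thesis using w walk_nonempty by blast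
  next
    case (Cons a r)
    show ?thesis
    proof (cases r)
      case Nil then show ?thesis using Cons by simp
    next
      case (Cons b r')
      show ?thesis
      proof (cases r')
        case Nil then show ?thesis using w Cons \<open>xs = a # r\<close> by simp
      next
        case (Cons c r'')
        then have "r'' = []" using l \<open>xs = a # r\<close> \<open>r = b # r'\<close> by simp
        then show ?thesis using w Cons \<open>xs = a # r\<close> \<open>r = b # r'\<close> by auto
      qed
    qed
  qed
qed

lemma dist_le: "walk_in S E xs \<Longrightarrow> hd xs = u \<Longrightarrow> last xs = v \<Longrightarrow> dist_in S E u v \<le> length xs - 1"
  unfolding dist_in_def
  apply (rule Least_le, rule exI[of _ xs]) by (cases xs) (auto simp: walk_in_def)

lemma dist_walk: "reach S E u v \<Longrightarrow> \<exists>xs. walk_in S E xs \<and> hd xs = u \<and> last xs = v \<and> length xs = Suc (dist_in S E u v)"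
proof -
  assume "reach S E u v"
  then obtain xs where "walk_in S E xs" "hd xs = u" "last xs = v" unfolding reach_def by blast
  then have "\<exists>n. \<exists>xs. walk_in S E xs \<and> hd xs = u \<and> last xs = v \<and> length xs = Suc n"
    using walk_nonempty by (metis Suc_pred length_greater_0_conv)
  then show ?thesis unfolding dist_in_def by (rule LeastI_ex)
qed

lemma key:
  assumes bip: "bipartite V E X Y" and dh: "distance_hereditary V E"
    and connV: "connected_in V E" and conn: "connected_in (V - {x}) E"
    and xX: "x \<in> X" and card: "card V \<ge> 3"
  shows "\<exists>x'\<in>X. x' \<noteq> x \<and> nbhd V E x \<subseteq> nbhd V E x'"
proof -
  have fin: "finite V" and edge: "\<And>u v. E u v \<Longrightarrow> u \<in> V \<and> v \<in> V \<and> E v u \<and> u \<noteq> v"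
    using bip unfolding bipartite_def graph_def by auto
  have sym: "\<And>a b. E a b \<Longrightarrow> E b a" using edge by blast
  have XY: "X \<inter> Y = {}" "X \<union> Y = V" and side: "\<And>u v. E u v \<Longrightarrow> (u \<in> X \<and> v \<in> Y) \<or> (u \<in> Y \<and> v \<in> X)"
    using bip unfolding bipartite_def by auto
  have xV: "x \<in> V" using xX XY by auto
  define N where "N = nbhd V E x"
  have nbE: "\<And>z w. w \<in> nbhd V E z \<longleftrightarrow> w \<in> V \<and> E z w" unfolding nbhd_def by auto
  have notYY: "\<And>a b. a \<in> Y \<Longrightarrow> b \<in> Y \<Longrightarrow> \<not> E a b" using side XY by blast
  have notXX: "\<And>a b. a \<in> X \<Longrightarrow> b \<in> X \<Longrightarrow> \<not> E a b" using side XY by blast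
  have "\<exists>v\<in>V. v \<noteq> x"
  proof (rule ccontr)
    assume "\<not> ?thesis" then have "V \<subseteq> {x}" by auto
    then have "card V \<le> card {x}" using card_mono[of "{x}" V] by simp
    then have "card V \<le> 1" by simp
    then show False using card by simp
  qed
  then obtain v where v: "v \<in> V" "v \<noteq> x" by blast
  have "reach V E x v" using connV xV v unfolding connected_in_def by blast
  then obtain y where y: "E x y" using reach_neighbor[of V E x v] v by auto
  have yY: "y \<in> Y" and yV: "y \<in> V" and yx: "y \<noteq> x" using side[OF y] edge[OF y] xX XY by auto
  have "\<exists>v\<in>V - {x}. v \<noteq> y"
  proof (rule ccontr)
    assume "\<not> ?thesis" then have "V \<subseteq> {x, y}" by auto
    then have "card V \<le> card {x,y}" using card_mono[of "{x,y}" V] by simp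
    also have "\<dots> \<le> 2" by (simp add: card_insert_if)
    finally show False using card by simp
  qed
  then obtain v' where v': "v' \<in> V - {x}" "v' \<noteq> y" by blast
  have "reach (V - {x}) E y v'" using conn v' yV yx unfolding connected_in_def by blast
  then obtain w where w: "w \<in> V - {x}" "E y w" using reach_neighbor[of "V - {x}" E y v'] v' by auto
  have wX: "w \<in> X" using side[OF w(2)] yY XY by auto
  define A where "A = X - {x}"
  define f where "f z = card (nbhd V E z \<inter> N)" for z
  have finA: "finite A" using fin XY unfolding A_def by (metis Diff_subset finite_subset sup_ge1)
  have wA: "w \<in> A" using wX w unfolding A_def by auto
  have finN: "\<And>z. finite (nbhd V E z \<inter> N)" using fin unfolding nbhd_def by auto
  define M where "M = Max (f ` A)"
  have "M \<in> f ` A" unfolding M_def using finA wA by (intro Max_in) auto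
  then obtain x' where x'A: "x' \<in> A" and fx': "f x' = M" by auto
  have maxf: "\<And>z. z \<in> A \<Longrightarrow> f z \<le> f x'" unfolding fx' M_def using finA by auto
  have "y \<in> nbhd V E w \<inter> N" using yV sym[OF w(2)] y unfolding N_def nbhd_def by auto
  then have "f w \<ge> 1" unfolding f_def using finN[of w] by (metis One_nat_def Suc_leI card_gt_0_iff empty_iff)
  then have "f x' \<ge> 1" using maxf[OF wA] by simp
  then obtain y0 where y0: "y0 \<in> nbhd V E x' \<inter> N" unfolding f_def
    by (metis card.empty ex_in_conv not_one_le_zero)
  have x'X: "x' \<in> X" "x' \<noteq> x" using x'A unfolding A_def by auto
  have "N \<subseteq> nbhd V E x'"
  proof (rule ccontr)
    assume "\<not> ?thesis"
    then obtain yb where yb: "yb \<in> N" "yb \<notin> nbhd V E x'" by blast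
    have ybV: "yb \<in> V" "E x yb" using yb unfolding N_def nbhd_def by auto
    have ybY: "yb \<in> Y" using side[OF ybV(2)] xX XY by auto
    have y0V: "y0 \<in> V" "E x y0" "E x' y0" using y0 unfolding N_def nbhd_def by auto
    have y0Y: "y0 \<in> Y" using side[OF y0V(2)] xX XY by auto
    have ybx': "\<not> E x' yb" using yb ybV unfolding nbhd_def by auto
    have y0yb: "y0 \<noteq> yb" using ybx' y0V by auto
    have y0x: "y0 \<noteq> x" "yb \<noteq> x" using edge y0V ybV by auto
    have "dist_in V E y0 yb \<le> length [y0, x, yb] - 1"
      by (rule dist_le) (use y0V ybV xV sym in auto)
    then have d2: "dist_in V E y0 yb \<le> 2" by simp
    have "dist_in (V - {x}) E y0 yb = dist_in V E y0 yb"
      using dh conn y0V ybV y0x unfolding distance_hereditary_def by blast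
    moreover have "reach (V - {x}) E y0 yb" using conn y0V ybV y0x unfolding connected_in_def by blast
    ultimately obtain q where q: "walk_in (V - {x}) E q" "hd q = y0" "last q = yb" "length q \<le> 3"
      using dist_walk d2 by (metis Suc_le_mono numeral_3_eq_3 numeral_2_eq_2)
    from short_walk[OF q(1) q(4)] q obtain m where m: "m \<in> V - {x}" "E y0 m" "E m yb"
      using y0yb notYY[OF y0Y ybY] by auto
    have mX: "m \<in> X" using side[OF m(2)] y0Y XY by auto
    have mA: "m \<in> A" using mX m unfolding A_def by auto
    have "\<exists>y1 \<in> nbhd V E x' \<inter> N. \<not> E m y1"
    proof (rule ccontr)
      assume "\<not> ?thesis"
      then have "nbhd V E x' \<inter> N \<subseteq> nbhd V E m \<inter> N" unfolding nbhd_def by auto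
      moreover have "yb \<in> nbhd V E m \<inter> N" "yb \<notin> nbhd V E x' \<inter> N" using yb ybV m unfolding nbhd_def by auto
      ultimately have "nbhd V E x' \<inter> N \<subset> nbhd V E m \<inter> N" by blast
      then have "f x' < f m" unfolding f_def using finN psubset_card_mono by blast
      then show False using maxf[OF mA] by simp
    qed
    then obtain y1 where y1: "y1 \<in> V" "E x' y1" "E x y1" "\<not> E m y1" unfolding nbhd_def N_def by auto
    have y1Y: "y1 \<in> Y" using side[OF y1(3)] xX XY by auto
    have x'V: "x' \<in> V" using x'X XY by auto
    have mV: "m \<in> V" using m by auto
    define S where "S = {y1, x', y0, m, yb}"
    have SV: "S \<subseteq> V" unfolding S_def using y1 x'V y0V mV ybV by auto
    have xS: "x \<notin> S" unfolding S_def using y0x y1 edge x'X m by auto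
    have r1: "reach S E yb yb" by (rule reach_refl) (simp add: S_def)
    have r2: "reach S E m yb" by (rule reach_edge) (use m in \<open>auto simp: S_def\<close>)
    have r3: "reach S E y0 yb" using reach_trans[OF reach_edge[of y0 S m E] r2] m S_def by auto
    have r4: "reach S E x' yb" using reach_trans[OF reach_edge[of x' S y0 E] r3] sym y0V S_def by auto
    have r5: "reach S E y1 yb" using reach_trans[OF reach_edge[of y1 S x' E] r4] sym y1 S_def by auto
    have toyb: "\<And>u. u \<in> S \<Longrightarrow> reach S E u yb" using r1 r2 r3 r4 r5 unfolding S_def by auto
    have connS: "connected_in S E" unfolding connected_in_def
    proof (intro conjI ballI)
      show "S \<noteq> {}" unfolding S_def by auto
    next
      fix u v assume "u \<in> S" "v \<in> S"
      have "reach S E yb v" using reach_sym[of E S v yb] sym toyb[OF \<open>v \<in> S\<close>] by blast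
      then show "reach S E u v" using reach_trans[OF toyb[OF \<open>u \<in> S\<close>]] by blast
    qed
    have "dist_in V E y1 yb \<le> length [y1, x, yb] - 1"
      by (rule dist_le) (use y1 ybV xV sym in auto)
    then have d2': "dist_in V E y1 yb \<le> 2" by simp
    have "dist_in S E y1 yb = dist_in V E y1 yb"
      using dh connS SV unfolding distance_hereditary_def S_def by blast
    moreover have "reach S E y1 yb" using r5 .
    ultimately obtain q' where q': "walk_in S E q'" "hd q' = y1" "last q' = yb" "length q' \<le> 3"
      using dist_walk d2' by (metis Suc_le_mono numeral_3_eq_3 numeral_2_eq_2)
    have "y1 \<noteq> yb" using y1 ybx' by auto
    moreover have "\<not> E y1 yb" using notYY[OF y1Y ybY] .
    moreover have "\<not> (\<exists>m'\<in>S. E y1 m' \<and> E m' yb)"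
    proof
      assume "\<exists>m'\<in>S. E y1 m' \<and> E m' yb"
      then obtain m' where m': "m' \<in> S" "E y1 m'" "E m' yb" by blast
      have "m' \<in> X" using side[OF m'(2)] y1Y XY by auto
      then have "m' = x' \<or> m' = m" using m'(1) y1Y y0Y ybY XY unfolding S_def by auto
      then show False using m' ybx' y1(4) sym by auto
    qed
    ultimately show False using short_walk[OF q'(1) q'(4)] q' by auto
  qed
  then show ?thesis using x'X unfolding N_def by blast
qed


lemma walk_map_replace:
  assumes sym: "\<And>a b. E a b \<Longrightarrow> E b a" and irr: "\<And>a. \<not> E a a"
    and dom: "\<And>b. E x b \<Longrightarrow> E x' b" and x'V: "x' \<in> V" and x'x: "x' \<noteq> x"
  shows "walk_in V E xs \<Longrightarrow> walk_in (V - {x}) E (map (\<lambda>z. if z = x then x' else z) xs)"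
proof (induction xs rule: induct_list012)
  case 1 then show ?case by (simp add: walk_in_def)
next
  case (2 a) then show ?case using x'V x'x by auto
next
  case (3 a b r)
  have ab: "E a b" "a \<in> V" and wb: "walk_in V E (b # r)" using "3.prems" by auto
  have IH: "walk_in (V - {x}) E (map (\<lambda>z. if z = x then x' else z) (b # r))" using "3.IH"(2) wb .
  have "E (if a = x then x' else a) (if b = x then x' else b)"
  proof (cases "a = x")
    case True
    then have "b \<noteq> x" using ab irr by auto
    then show ?thesis using True dom ab by auto
  next
    case False
    show ?thesis
    proof (cases "b = x")
      case True then show ?thesis using False ab dom sym by auto
    next
      case False2: False then show ?thesis using False ab by auto
    qed
  qed
  then show ?case using IH ab x'V x'x by auto
qed

lemma dominated_connected:
  assumes bip: "bipartite V E X Y" and connV: "connected_in V E"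
    and x'V: "x' \<in> V" and x'x: "x' \<noteq> x" and sub: "nbhd V E x \<subseteq> nbhd V E x'"
  shows "connected_in (V - {x}) E"
proof -
  have edge: "\<And>u v. E u v \<Longrightarrow> u \<in> V \<and> v \<in> V \<and> E v u \<and> u \<noteq> v"
    using bip unfolding bipartite_def graph_def by auto
  have sym: "\<And>a b. E a b \<Longrightarrow> E b a" using edge by blast
  have irr: "\<And>a. \<not> E a a" using edge by blast
  have dom: "\<And>b. E x b \<Longrightarrow> E x' b" using sub edge unfolding nbhd_def by blast
  define g where "g z = (if z = x then x' else z)" for z
  show ?thesis unfolding connected_in_def
  proof (intro conjI ballI)
    show "V - {x} \<noteq> {}" using x'V x'x by auto
  next
    fix u v assume u: "u \<in> V - {x}" and v: "v \<in> V - {x}"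
    then obtain xs where xs: "walk_in V E xs" "hd xs = u" "last xs = v"
      using connV unfolding connected_in_def reach_def by blast
    have ne: "xs \<noteq> []" using walk_nonempty[OF xs(1)] .
    have w: "walk_in (V - {x}) E (map g xs)"
      unfolding g_def by (rule walk_map_replace[OF sym irr dom x'V x'x xs(1)])
    have "hd (map g xs) = u" "last (map g xs) = v" using ne xs u v
      by (auto simp: g_def hd_map last_map)
    then show "reach (V - {x}) E u v" unfolding reach_def using w by blast
  qed
qed

lemma comp_connected:
  assumes "connected_in S E" shows "components S E = {S}"
proof -
  have "\<And>u. u \<in> S \<Longrightarrow> {v \<in> S. reach S E u v} = S" using assms unfolding connected_in_def by auto
  moreover have "S \<noteq> {}" using assms unfolding connected_in_def by auto
  ultimately show ?thesis unfolding components_def by auto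
qed

lemma cut_iff:
  assumes connV: "connected_in V E" and fin: "finite V" and xV: "x \<in> V" and ne: "V - {x} \<noteq> {}"
  shows "cut_vertex V E x \<longleftrightarrow> \<not> connected_in (V - {x}) E"
proof
  assume "cut_vertex V E x"
  then show "\<not> connected_in (V - {x}) E"
    unfolding cut_vertex_def using comp_connected[OF connV] comp_connected[of "V - {x}" E] by auto
next
  assume nc: "\<not> connected_in (V - {x}) E"
  then obtain u v where uv: "u \<in> V - {x}" "v \<in> V - {x}" "\<not> reach (V - {x}) E u v"
    using ne unfolding connected_in_def by auto
  let ?c = "\<lambda>u. {v \<in> V - {x}. reach (V - {x}) E u v}"
  have "?c u \<noteq> ?c v" using uv reach_refl[of v "V - {x}" E] by auto
  moreover have "?c u \<in> components (V - {x}) E" "?c v \<in> components (V - {x}) E"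
    using uv unfolding components_def by auto
  moreover have "finite (components (V - {x}) E)" unfolding components_def using fin by auto
  ultimately have "card {?c u, ?c v} \<le> card (components (V - {x}) E)"
    by (intro card_mono) auto
  then have "card (components (V - {x}) E) \<ge> 2" using \<open>?c u \<noteq> ?c v\<close> by simp
  then show "cut_vertex V E x" unfolding cut_vertex_def using comp_connected[OF connV] xV by auto
qed

lemma maxX:
  assumes bip: "bipartite V E X Y" and xX: "x \<in> X"
  shows "({x}, nbhd V E x) \<in> max_bicliques E X Y \<longleftrightarrow> \<not> (\<exists>x'\<in>X. x' \<noteq> x \<and> nbhd V E x \<subseteq> nbhd V E x')"
proof -
  have XY: "X \<inter> Y = {}" "X \<union> Y = V" and side: "\<And>u v. E u v \<Longrightarrow> (u \<in> X \<and> v \<in> Y) \<or> (u \<in> Y \<and> v \<in> X)"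
    using bip unfolding bipartite_def by auto
  have nb: "\<And>z w. w \<in> nbhd V E z \<longleftrightarrow> w \<in> V \<and> E z w" unfolding nbhd_def by simp
  have NY: "nbhd V E x \<subseteq> Y"
  proof
    fix w assume "w \<in> nbhd V E x"
    then have "E x w" using nb by blast
    then show "w \<in> Y" using side[OF \<open>E x w\<close>] xX XY(1) by blast
  qed
  have bc: "biclique E X Y ({x}, nbhd V E x)" unfolding biclique_def using NY xX nb by simp
  show ?thesis
  proof
    assume m: "({x}, nbhd V E x) \<in> max_bicliques E X Y"
    show "\<not> (\<exists>x'\<in>X. x' \<noteq> x \<and> nbhd V E x \<subseteq> nbhd V E x')"
    proof
      assume "\<exists>x'\<in>X. x' \<noteq> x \<and> nbhd V E x \<subseteq> nbhd V E x'"
      then obtain x' where x': "x' \<in> X" "x' \<noteq> x" "nbhd V E x \<subseteq> nbhd V E x'" by blast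
      have "\<forall>w\<in>nbhd V E x. E x' w" using x'(3) nb by blast
      then have "biclique E X Y ({x, x'}, nbhd V E x)" using bc x'(1) unfolding biclique_def by simp
      moreover have "fst ({x}, nbhd V E x) \<subseteq> fst ({x, x'}, nbhd V E x)" by simp
      moreover have "snd ({x}, nbhd V E x) \<subseteq> snd ({x, x'}, nbhd V E x)" by simp
      ultimately have "({x, x'}, nbhd V E x) = ({x}, nbhd V E x)" using m unfolding max_bicliques_def by blast
      then show False using x'(2) by auto
    qed
  next
    assume nd: "\<not> (\<exists>x'\<in>X. x' \<noteq> x \<and> nbhd V E x \<subseteq> nbhd V E x')"
    show "({x}, nbhd V E x) \<in> max_bicliques E X Y" unfolding max_bicliques_def
    proof (intro CollectI conjI allI impI bc)
      fix B' assume B': "biclique E X Y B' \<and> fst ({x}, nbhd V E x) \<subseteq> fst B' \<and> snd ({x}, nbhd V E x) \<subseteq> snd B'"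
      obtain U W where BUW: "B' = (U, W)" by (cases B')
      have U1: "U \<subseteq> X" and W1: "W \<subseteq> Y" and UW: "\<And>u w. u \<in> U \<Longrightarrow> w \<in> W \<Longrightarrow> E u w"
        and xU: "x \<in> U" and NW: "nbhd V E x \<subseteq> W"
        using B' unfolding BUW biclique_def by auto
      have "W \<subseteq> nbhd V E x"
      proof
        fix w assume "w \<in> W"
        then have "E x w" "w \<in> V" using UW[OF xU] W1 XY(2) by auto
        then show "w \<in> nbhd V E x" using nb by blast
      qed
      then have W: "W = nbhd V E x" using NW by blast
      have "U \<subseteq> {x}"
      proof
        fix u assume uU: "u \<in> U"
        have "nbhd V E x \<subseteq> nbhd V E u"
        proof
          fix w assume "w \<in> nbhd V E x"
          then have "w \<in> W" "w \<in> V" using W nb by auto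
          then show "w \<in> nbhd V E u" using UW[OF uU] nb by blast
        qed
        then show "u \<in> {x}" using nd uU U1 by blast
      qed
      then have "U = {x}" using xU by blast
      then show "B' = ({x}, nbhd V E x)" using BUW W by simp
    qed
  qed
qed

lemma maxY:
  assumes bip: "bipartite V E X Y" and yY: "y \<in> Y"
  shows "(nbhd V E y, {y}) \<in> max_bicliques E X Y \<longleftrightarrow> \<not> (\<exists>y'\<in>Y. y' \<noteq> y \<and> nbhd V E y \<subseteq> nbhd V E y')"
proof -
  have sym: "\<And>u v. E u v \<Longrightarrow> E v u"
    using bip unfolding bipartite_def graph_def by blast
  have XY: "X \<inter> Y = {}" "X \<union> Y = V" and side: "\<And>u v. E u v \<Longrightarrow> (u \<in> X \<and> v \<in> Y) \<or> (u \<in> Y \<and> v \<in> X)"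
    using bip unfolding bipartite_def by auto
  have nb: "\<And>z w. w \<in> nbhd V E z \<longleftrightarrow> w \<in> V \<and> E z w" unfolding nbhd_def by simp
  have NX: "nbhd V E y \<subseteq> X"
  proof
    fix w assume "w \<in> nbhd V E y"
    then have "E y w" using nb by blast
    then show "w \<in> X" using side[OF \<open>E y w\<close>] yY XY(1) by blast
  qed
  have "\<forall>u\<in>nbhd V E y. E u y" using nb sym by blast
  then have bc: "biclique E X Y (nbhd V E y, {y})" unfolding biclique_def using NX yY by simp
  show ?thesis
  proof
    assume m: "(nbhd V E y, {y}) \<in> max_bicliques E X Y"
    show "\<not> (\<exists>y'\<in>Y. y' \<noteq> y \<and> nbhd V E y \<subseteq> nbhd V E y')"
    proof
      assume "\<exists>y'\<in>Y. y' \<noteq> y \<and> nbhd V E y \<subseteq> nbhd V E y'"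
      then obtain y' where y': "y' \<in> Y" "y' \<noteq> y" "nbhd V E y \<subseteq> nbhd V E y'" by blast
      have "\<forall>u\<in>nbhd V E y. E u y'" using y'(3) nb sym by blast
      then have "biclique E X Y (nbhd V E y, {y, y'})" using bc y'(1) unfolding biclique_def by simp
      moreover have "fst (nbhd V E y, {y}) \<subseteq> fst (nbhd V E y, {y, y'})" by simp
      moreover have "snd (nbhd V E y, {y}) \<subseteq> snd (nbhd V E y, {y, y'})" by simp
      ultimately have "(nbhd V E y, {y, y'}) = (nbhd V E y, {y})" using m unfolding max_bicliques_def by blast
      then show False using y'(2) by auto
    qed
  next
    assume nd: "\<not> (\<exists>y'\<in>Y. y' \<noteq> y \<and> nbhd V E y \<subseteq> nbhd V E y')"
    show "(nbhd V E y, {y}) \<in> max_bicliques E X Y" unfolding max_bicliques_def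
    proof (intro CollectI conjI allI impI bc)
      fix B' assume B': "biclique E X Y B' \<and> fst (nbhd V E y, {y}) \<subseteq> fst B' \<and> snd (nbhd V E y, {y}) \<subseteq> snd B'"
      obtain U W where BUW: "B' = (U, W)" by (cases B')
      have U1: "U \<subseteq> X" and W1: "W \<subseteq> Y" and UW: "\<And>u w. u \<in> U \<Longrightarrow> w \<in> W \<Longrightarrow> E u w"
        and yW: "y \<in> W" and NU: "nbhd V E y \<subseteq> U"
        using B' unfolding BUW biclique_def by auto
      have "U \<subseteq> nbhd V E y"
      proof
        fix u assume "u \<in> U"
        then have "E y u" "u \<in> V" using UW[OF _ yW] sym U1 XY(2) by auto
        then show "u \<in> nbhd V E y" using nb by blast
      qed
      then have U: "U = nbhd V E y" using NU by blast
      have "W \<subseteq> {y}"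
      proof
        fix w assume wW: "w \<in> W"
        have "nbhd V E y \<subseteq> nbhd V E w"
        proof
          fix u assume "u \<in> nbhd V E y"
          then have "u \<in> U" "u \<in> V" using U nb by auto
          then show "u \<in> nbhd V E w" using UW[OF _ wW] sym nb by blast
        qed
        then show "w \<in> {y}" using nd wW W1 by blast
      qed
      then have "W = {y}" using yW by blast
      then show "B' = (nbhd V E y, {y})" using BUW U by simp
    qed
  qed
qed

lemma bip_swap: "bipartite V E X Y \<Longrightarrow> bipartite V E Y X"
  unfolding bipartite_def by auto

theorem lemma3:
  fixes V X Y :: "'a set" and E :: "'a \<Rightarrow> 'a \<Rightarrow> bool"
  assumes "BDH V E X Y"
    and "connected_in V E"
    and "card V \<ge> 3"
    and "\<forall>v\<in>V. \<not> universal_vertex V E X Y v"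
  shows "(\<forall>x\<in>X. cut_vertex V E x \<longleftrightarrow> ({x}, nbhd V E x) \<in> max_bicliques E X Y) \<and>
         (\<forall>y\<in>Y. cut_vertex V E y \<longleftrightarrow> (nbhd V E y, {y}) \<in> max_bicliques E X Y)"
proof -
  have bip: "bipartite V E X Y" and dh: "distance_hereditary V E" using assms(1) unfolding BDH_def by auto
  have fin: "finite V" using bip unfolding bipartite_def graph_def by auto
  have XY: "X \<union> Y = V" using bip unfolding bipartite_def by auto
  have ne: "\<And>x. V - {x} \<noteq> {}"
  proof
    fix x assume "V - {x} = {}"
    then have "V \<subseteq> {x}" by auto
    then have "card V \<le> card {x}" using card_mono[of "{x}" V] by simp
    then show False using assms(3) by simp
  qed
  have gen: "cut_vertex V E x \<longleftrightarrow> \<not> (\<exists>x'\<in>A. x' \<noteq> x \<and> nbhd V E x \<subseteq> nbhd V E x')"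
    if b: "bipartite V E A B" and xA: "x \<in> A" for A B x
  proof -
    have AV: "A \<subseteq> V" using b unfolding bipartite_def by auto
    have xV: "x \<in> V" using xA AV by auto
    show ?thesis
    proof
      assume "cut_vertex V E x"
      then have nc: "\<not> connected_in (V - {x}) E" using cut_iff[OF assms(2) fin xV ne] by simp
      show "\<not> (\<exists>x'\<in>A. x' \<noteq> x \<and> nbhd V E x \<subseteq> nbhd V E x')"
        using dominated_connected[OF b assms(2)] nc AV by blast
    next
      assume "\<not> (\<exists>x'\<in>A. x' \<noteq> x \<and> nbhd V E x \<subseteq> nbhd V E x')"
      then have "\<not> connected_in (V - {x}) E" using key[OF b dh assms(2) _ xA assms(3)] by blast
      then show "cut_vertex V E x" using cut_iff[OF assms(2) fin xV ne] by simp
    qed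
  qed
  show ?thesis
  proof (intro conjI ballI)
    fix x assume "x \<in> X"
    then show "cut_vertex V E x \<longleftrightarrow> ({x}, nbhd V E x) \<in> max_bicliques E X Y"
      using gen[OF bip] maxX[OF bip] by simp
  next
    fix y assume "y \<in> Y"
    then show "cut_vertex V E y \<longleftrightarrow> (nbhd V E y, {y}) \<in> max_bicliques E X Y"
      using gen[OF bip_swap[OF bip]] maxY[OF bip] by simp
  qed
qed

end
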